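(* Let $f\colon X\to X$ be a totally transitive homeomorphism of a metric space $X$ and let $\mu$ be a Borel probability measure on $X$ inner-distal with respect to $f$. If $X$ is $\mu$-Baire, then $\mu(\operatorname{Int}\operatorname{Per}(f))=0$.
   Context: $\mathcal{P}(x)=\{y\colon \inf_{n\in\mathbb{Z}} d(f^n(x),f^n(y))=0\}$; $\mu$ is inner-distal if $\mu(\operatorname{Int}\mathcal{P}(x))=0$ for all $x$. A set $F$ is $\mu$-nowhere-dense if $\mu(\operatorname{Int}\overline{F})=0$; $\mu$-meagre means a countable union of $\mu$-nowhere-dense sets; $X$ is $\mu$-Baire if $\mu(\operatorname{Int}A)=0$ for every $\mu$-meagre $A$. A homeomorphism is transitive if it has a dense orbit; $f$ is totally transitive if $f^n$ is transitive for every integer $n\ge1$. $\operatorname{Per}(f)=\{p\colon f^n(p)=p$ for some $n\ge1\}$. *)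

theory Defs
  imports "HOL-Probability.Probability"
begin

definition homeo :: "('a::topological_space \<Rightarrow> 'a) \<Rightarrow> bool" where
  "homeo f \<longleftrightarrow> (\<exists>g. homeomorphism UNIV UNIV f g)"

definition iter_int :: "('a \<Rightarrow> 'a) \<Rightarrow> int \<Rightarrow> 'a \<Rightarrow> 'a" where
  "iter_int f n = (if 0 \<le> n then f ^^ nat n else inv f ^^ nat (- n))"

definition proximal_cell :: "('a::metric_space \<Rightarrow> 'a) \<Rightarrow> 'a \<Rightarrow> 'a set" where
  "proximal_cell f x = {y. (INF n::int. dist (iter_int f n x) (iter_int f n y)) = 0}"

definition inner_distal :: "'a::metric_space measure \<Rightarrow> ('a \<Rightarrow> 'a) \<Rightarrow> bool" where
  "inner_distal \<mu> f \<longleftrightarrow> (\<forall>x. measure \<mu> (interior (proximal_cell f x)) = 0)"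

definition mu_nowhere_dense :: "'a::topological_space measure \<Rightarrow> 'a set \<Rightarrow> bool" where
  "mu_nowhere_dense \<mu> F \<longleftrightarrow> measure \<mu> (interior (closure F)) = 0"

definition mu_meagre :: "'a::topological_space measure \<Rightarrow> 'a set \<Rightarrow> bool" where
  "mu_meagre \<mu> A \<longleftrightarrow> (\<exists>F::nat \<Rightarrow> 'a set. (\<forall>n. mu_nowhere_dense \<mu> (F n)) \<and> A = (\<Union>n. F n))"

definition mu_Baire :: "'a::topological_space measure \<Rightarrow> bool" where
  "mu_Baire \<mu> \<longleftrightarrow> (\<forall>A. mu_meagre \<mu> A \<longrightarrow> measure \<mu> (interior A) = 0)"

definition transitive_map :: "('a::topological_space \<Rightarrow> 'a) \<Rightarrow> bool" where
  "transitive_map f \<longleftrightarrow> (\<exists>x. closure {iter_int f n x | n. True} = UNIV)"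

definition totally_transitive :: "('a::topological_space \<Rightarrow> 'a) \<Rightarrow> bool" where
  "totally_transitive f \<longleftrightarrow> (\<forall>n::nat. 1 \<le> n \<longrightarrow> transitive_map (f ^^ n))"

definition Per :: "('a \<Rightarrow> 'a) \<Rightarrow> 'a set" where
  "Per f = {p. \<exists>n::nat. 1 \<le> n \<and> (f ^^ n) p = p}"

end

theory Submission
  imports Defs
begin

lemma cont_funpow:
  fixes f :: "'a::topological_space \<Rightarrow> 'a"
  shows "continuous_on UNIV f \<Longrightarrow> continuous_on UNIV (f ^^ n)"
proof (induction n)
  case 0
  have "f ^^ 0 = id" by (rule funpow.simps(1))
  then show ?case using continuous_on_id' by metis
next
  case (Suc n)
  have "continuous_on UNIV (f \<circ> (f ^^ n))"
    by (rule continuous_on_compose) (use Suc in \<open>auto intro: continuous_on_subset\<close>)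
  then show ?case by (simp add: funpow_Suc_right[symmetric] funpow_swap1 comp_def)
qed

lemma fix_all_iter:
  assumes "bij g" "g x = x"
  shows "iter_int g m x = x"
proof -
  have i: "inv g x = x" using assms by (metis bij_def inv_f_f)
  have "(g ^^ k) x = x" for k by (induction k) (use assms in auto)
  moreover have "(inv g ^^ k) x = x" for k by (induction k) (use i in auto)
  ultimately show ?thesis by (simp add: iter_int_def)
qed

lemma fixed_back:
  assumes "bij g" "g (iter_int g m x) = iter_int g m x"
  shows "g x = x"
proof (cases "0 \<le> m")
  case True
  have "(g ^^ nat m) (g x) = (g ^^ nat m) x"
    using assms(2) True by (simp add: iter_int_def funpow_swap1)
  moreover have "inj (g ^^ nat m)" using assms(1) bij_fn bij_is_inj by blast
  ultimately show ?thesis by (meson injD)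
next
  case False
  have c: "g ((inv g ^^ k) y) = (inv g ^^ k) (g y)" for k y
  proof (induction k arbitrary: y)
    case 0 then show ?case by simp
  next
    case (Suc k)
    have "g ((inv g ^^ Suc k) y) = g ((inv g ^^ k) (inv g y))" by (simp add: funpow_swap1)
    also have "\<dots> = (inv g ^^ k) (g (inv g y))" by (rule Suc)
    also have "\<dots> = (inv g ^^ k) y" using assms(1) by (simp add: bij_is_surj surj_f_inv_f)
    also have "\<dots> = (inv g ^^ k) (inv g (g y))" using assms(1) by (simp add: bij_is_inj)
    also have "\<dots> = (inv g ^^ Suc k) (g y)" by (simp add: funpow_swap1)
    finally show ?case .
  qed
  have "(inv g ^^ nat (-m)) (g x) = (inv g ^^ nat (-m)) x"
    using assms(2) False c by (simp add: iter_int_def)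
  moreover have "inj (inv g ^^ nat (-m))" using assms(1) bij_fn bij_is_inj bij_imp_bij_inv by blast
  ultimately show ?thesis by (meson injD)
qed

theorem lemma3p8:
  fixes f :: "'a::metric_space \<Rightarrow> 'a" and \<mu> :: "'a measure"
  assumes "homeo f"
    and "totally_transitive f"
    and "prob_space \<mu>" and "sets \<mu> = sets borel"
    and "inner_distal \<mu> f"
    and "mu_Baire \<mu>"
  shows "measure \<mu> (interior (Per f)) = 0"
proof (rule ccontr)
  assume H: "measure \<mu> (interior (Per f)) \<noteq> 0"
  obtain h where hm: "homeomorphism UNIV UNIV f h" using assms(1) homeo_def by blast
  have h1: "\<And>x. h (f x) = x" and h2: "\<And>y. f (h y) = y" using hm by (auto simp: homeomorphism_def)
  have bf: "bij f" by (rule bijI, rule injI, metis h1, metis h2 surjI)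
  have cf: "continuous_on UNIV f" using hm homeomorphism_def by blast
  define F where "F k = {p. (f ^^ Suc k) p = p}" for k
  have PF: "Per f = (\<Union>k. F k)"
  proof
    show "Per f \<subseteq> (\<Union>k. F k)"
    proof
      fix p assume "p \<in> Per f"
      then obtain n where n: "1 \<le> n" "(f ^^ n) p = p" unfolding Per_def by blast
      then have "Suc (n - 1) = n" by simp
      then have "p \<in> F (n - 1)" using n unfolding F_def by simp
      then show "p \<in> (\<Union>k. F k)" by blast
    qed
    show "(\<Union>k. F k) \<subseteq> Per f" unfolding Per_def F_def by (auto intro!: exI[of _ "Suc _"])
  qed
  have clF: "closed (F k)" for k
    unfolding F_def by (rule closed_Collect_eq) (use cont_funpow[OF cf, of "Suc k"] in \<open>auto simp del: funpow.simps intro: continuous_on_id\<close>)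
  have "\<not> mu_meagre \<mu> (Per f)" using assms(6) H mu_Baire_def by blast
  have "\<exists>k. measure \<mu> (interior (closure (F k))) \<noteq> 0"
  proof (rule ccontr)
    assume "\<not> ?thesis"
    then have "\<forall>k. mu_nowhere_dense \<mu> (F k)" unfolding mu_nowhere_dense_def by blast
    then have "mu_meagre \<mu> (Per f)" unfolding mu_meagre_def using PF by blast
    then show False using \<open>\<not> mu_meagre \<mu> (Per f)\<close> by blast
  qed
  then obtain k where k: "measure \<mu> (interior (closure (F k))) \<noteq> 0" by blast
  define g where "g = f ^^ Suc k"
  have bg: "bij g" unfolding g_def using bf bij_fn by blast
  have VF: "interior (F k) \<subseteq> {p. g p = p}"
    using interior_subset unfolding F_def g_def by blast
  have Vne: "interior (F k) \<noteq> {}" using k clF closure_closed by fastforce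
  obtain x where x: "closure {iter_int g n x | n. True} = UNIV"
    using assms(2) unfolding totally_transitive_def transitive_map_def g_def by force
  obtain y where y: "y \<in> interior (F k)" using Vne by blast
  have "y \<in> closure {iter_int g n x | n. True}" using x by blast
  then obtain z where z: "z \<in> {iter_int g n x | n. True}" "z \<in> interior (F k)"
    using open_Int_closure_eq_empty[OF open_interior, of "F k" "{iter_int g n x | n. True}"] y x by blast
  then obtain m where zm: "z = iter_int g m x" by blast
  have "g x = x" using fixed_back[OF bg] z(2) VF zm by blast
  then have "{iter_int g n x | n. True} = {x}" using fix_all_iter[OF bg] by auto
  then have U: "UNIV = {x}" using x by simp
  have "proximal_cell f x = UNIV"
  proof -
    have d: "dist (iter_int f n x) (iter_int f n w) = 0" for n w
      using U by (metis UNIV_I dist_self singletonD)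
    have "(INF n::int. dist (iter_int f n x) (iter_int f n w)) = 0" for w
      unfolding d by simp
    then show ?thesis unfolding proximal_cell_def by blast
  qed
  then have "measure \<mu> (interior (proximal_cell f x)) = 1"
  proof -
    have "space \<mu> = UNIV" using sets_eq_imp_space_eq[OF assms(4)] by simp
    then show ?thesis using prob_space.prob_space[OF assms(3)] \<open>proximal_cell f x = UNIV\<close> by simp
  qed
  then show False using assms(5) inner_distal_def by (metis zero_neq_one)
qed

end
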